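(* Let $F$ and $G$ be BISO channels with output alphabet $\{-1,0,1\}$ (i.e. $l=1$) such that $\eta_{KL}(F)=\eta_{KL}(G)$. Then $F\succeq_{\mathrm{l.n.}}G$ or $G\succeq_{\mathrm{l.n.}}F$.
   Context: A binary-input symmetric-output (BISO) channel is a channel $P_{Y|X}$ with input alphabet $\{0,1\}$ and finite output alphabet $\mathcal Y=\{0,\pm1,\dots,\pm l\}$ for some integer $l\ge 1$ (some transition probabilities may be zero), such that $P_{Y|X}(y|0)=P_{Y|X}(-y|1)=:p_y$ for all $y\in\mathcal Y$. The KL contraction coefficient is $\eta_{KL}(P)=\sup_{P_X,Q_X}\frac{D(P\circ P_X\|P\circ Q_X)}{D(P_X\|Q_X)}$ (supremum over input distributions with $0<D(P_X\|Q_X)<\infty$, $P\circ P_X$ the output distribution). For channels $P_{Y|X},Q_{Y'|X}$ with the same input alphabet, $P\succeq_{\mathrm{l.n.}}Q$ (less noisy) means: for every finite-alphabet random variable $U$ and every joint distribution $P_{UX}$, with $U-X-Y$ and $U-X-Y'$ Markov chains, $I(U:Y)\ge I(U:Y')$. *)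

theory Defs
  imports Complex_Main "HOL-Library.Extended_Real"
begin

definition pmf_on :: "'a set \<Rightarrow> ('a \<Rightarrow> real) \<Rightarrow> bool" where
  "pmf_on A p \<longleftrightarrow> (\<forall>a\<in>A. 0 \<le> p a) \<and> (\<Sum>a\<in>A. p a) = 1"

definition channel :: "'a set \<Rightarrow> 'b set \<Rightarrow> ('a \<Rightarrow> 'b \<Rightarrow> real) \<Rightarrow> bool" where
  "channel X Y W \<longleftrightarrow> (\<forall>x\<in>X. pmf_on Y (W x))"

definition out_dist :: "'a set \<Rightarrow> ('a \<Rightarrow> 'b \<Rightarrow> real) \<Rightarrow> ('a \<Rightarrow> real) \<Rightarrow> 'b \<Rightarrow> real" where
  "out_dist X W p = (\<lambda>y. \<Sum>x\<in>X. p x * W x y)"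

definition KL :: "'a set \<Rightarrow> ('a \<Rightarrow> real) \<Rightarrow> ('a \<Rightarrow> real) \<Rightarrow> ereal" where
  "KL A p q = (if \<exists>a\<in>A. 0 < p a \<and> q a = 0 then \<infinity>
               else ereal (\<Sum>a\<in>{a\<in>A. 0 < p a}. p a * ln (p a / q a)))"

definition eta_KL :: "'a set \<Rightarrow> 'b set \<Rightarrow> ('a \<Rightarrow> 'b \<Rightarrow> real) \<Rightarrow> ereal" where
  "eta_KL X Y W = (SUP pq \<in> {(p, q). pmf_on X p \<and> pmf_on X q \<and> 0 < KL X p q \<and> KL X p q < \<infinity>}.
       KL Y (out_dist X W (fst pq)) (out_dist X W (snd pq)) / KL X (fst pq) (snd pq))"

text \<open>Mutual information I(U;Y) where P_{UX} is the joint law on U \<times> X and Y is the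
  output of channel W fed with X (so U - X - Y is a Markov chain).\<close>
definition mutual_info :: "'u set \<Rightarrow> 'a set \<Rightarrow> 'b set \<Rightarrow> ('a \<Rightarrow> 'b \<Rightarrow> real)
    \<Rightarrow> ('u \<Rightarrow> 'a \<Rightarrow> real) \<Rightarrow> real" where
  "mutual_info U X Y W PUX =
    (let PUY = (\<lambda>u y. \<Sum>x\<in>X. PUX u x * W x y);
         PU = (\<lambda>u. \<Sum>x\<in>X. PUX u x);
         PY = (\<lambda>y. \<Sum>u\<in>U. PUY u y)
     in \<Sum>(u, y)\<in>{(u, y) \<in> U \<times> Y. 0 < PUY u y}. PUY u y * ln (PUY u y / (PU u * PY y)))"

text \<open>Finite alphabets for U are represented (up to bijection)
  as finite subsets of nat.\<close>
definition less_noisy :: "'a set \<Rightarrow> 'b set \<Rightarrow> ('a \<Rightarrow> 'b \<Rightarrow> real)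
    \<Rightarrow> 'c set \<Rightarrow> ('a \<Rightarrow> 'c \<Rightarrow> real) \<Rightarrow> bool" where
  "less_noisy X Y W Y' W' \<longleftrightarrow>
    (\<forall>(U :: nat set) (PUX :: nat \<Rightarrow> 'a \<Rightarrow> real).
       finite U \<and> pmf_on (U \<times> X) (\<lambda>(u, x). PUX u x) \<longrightarrow>
       mutual_info U X Y' W' PUX \<le> mutual_info U X Y W PUX)"

definition biso1 :: "(nat \<Rightarrow> int \<Rightarrow> real) \<Rightarrow> bool" where
  "biso1 W \<longleftrightarrow> channel {0, 1} {-1, 0, 1} W \<and> (\<forall>y\<in>{-1, 0, 1}. W 0 y = W 1 (- y))"

end

theory Submission imports Defs "HOL-Real_Asymp.Real_Asymp" begin

definition xlr :: "real \<Rightarrow> real \<Rightarrow> real" where "xlr r q = r * ln (r / q)"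
definition dd :: "real \<Rightarrow> real \<Rightarrow> real" where
  "dd z w = xlr ((1+z)/2) ((1+w)/2) + xlr ((1-z)/2) ((1-w)/2)"
definition NN :: "real \<Rightarrow> real" where "NN u = u * ln u"

lemma cont_NN: "continuous_on {0..} NN"
proof -
  have "continuous (at u within {0..}) NN" if "u \<ge> 0" for u
  proof (cases "u = 0")
    case True
    have "(NN \<longlongrightarrow> 0) (at_right 0)" unfolding NN_def[abs_def] by real_asymp
    then show ?thesis using True by (simp add: continuous_within at_within_Ici_at_right NN_def)
  next
    case False then have "u > 0" using that by simp
    then have "isCont NN u" unfolding NN_def by (auto intro!: continuous_intros)
    then show ?thesis by (rule continuous_at_imp_continuous_at_within)
  qed
  then show ?thesis by (simp add: continuous_on_eq_continuous_within)
qed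

lemma DERIV_NN: "u > 0 \<Longrightarrow> (NN has_real_derivative (ln u + 1)) (at u)"
  unfolding NN_def by (auto intro!: derivative_eq_intros)

lemma dd_NN:
  assumes "\<bar>w\<bar> < 1" "\<bar>z\<bar> \<le> 1"
  shows "dd z w = (NN (1+z) + NN (1-z))/2 - (1+z)/2 * ln (1+w) - (1-z)/2 * ln (1-w)"
proof -
  have a: "xlr ((1+z)/2) ((1+w)/2) = NN (1+z)/2 - (1+z)/2 * ln (1+w)"
  proof (cases "1+z = 0")
    case True then show ?thesis by (simp add: xlr_def NN_def)
  next
    case False then have "1+z > 0" using assms by linarith
    moreover have "1 + w > 0" using assms by linarith
    moreover have e: "((1+z)/2)/((1+w)/2) = (1+z)/(1+w)" using \<open>1+w>0\<close> by (simp add: field_simps)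
    ultimately have l: "ln (((1+z)/2)/((1+w)/2)) = ln (1+z) - ln (1+w)"
      by (simp add: e ln_div)
    show ?thesis unfolding xlr_def NN_def l by (simp add: algebra_simps)
  qed
  have b: "xlr ((1-z)/2) ((1-w)/2) = NN (1-z)/2 - (1-z)/2 * ln (1-w)"
  proof (cases "1-z = 0")
    case True then show ?thesis by (simp add: xlr_def NN_def)
  next
    case False then have "1-z > 0" using assms by linarith
    moreover have "1 - w > 0" using assms by linarith
    moreover have e: "((1-z)/2)/((1-w)/2) = (1-z)/(1-w)" using \<open>1-w>0\<close> by (simp add: field_simps)
    ultimately have l: "ln (((1-z)/2)/((1-w)/2)) = ln (1-z) - ln (1-w)"
      by (simp add: e ln_div)
    show ?thesis unfolding xlr_def NN_def l by (simp add: algebra_simps)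
  qed
  show ?thesis unfolding dd_def a b by simp
qed

lemma cont_NN_comp [continuous_intros]:
  assumes "continuous_on S f" "\<And>x. x \<in> S \<Longrightarrow> f x \<ge> 0"
  shows "continuous_on S (\<lambda>x. NN (f x))"
  using continuous_on_compose2[OF cont_NN assms(1)] assms(2) by auto

lemma k_mono:
  fixes c :: real
  assumes c: "0 < c" "c < 1" and u: "-1 < u1" "u1 \<le> u2" "u2 < 1"
  shows "c * ((ln(1+u1) - ln(1-u1))/2) - (ln(1+c*u1) - ln(1-c*u1))/2
      \<le> c * ((ln(1+u2) - ln(1-u2))/2) - (ln(1+c*u2) - ln(1-c*u2))/2"
proof -
  define k where "k u = c * ((ln(1+u) - ln(1-u))/2) - (ln(1+c*u) - ln(1-c*u))/2" for u
  have "k u1 \<le> k u2"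
  proof (rule DERIV_nonneg_imp_nondecreasing[OF u(2)])
    fix x assume x: "u1 \<le> x" "x \<le> u2"
    then have x1: "-1 < x" "x < 1" using u by auto
    have ax: "\<bar>x\<bar> < 1" using x1 by auto
    have "\<bar>c*x\<bar> = c*\<bar>x\<bar>" using c by (simp add: abs_mult)
    also have "\<dots> < 1*1" using c ax by (intro mult_strict_mono) auto
    finally have cx: "\<bar>c*x\<bar> < 1" by simp
    have cx1: "0 < 1 + c*x" "0 < 1 - c*x" using cx by (auto simp: abs_less_iff)
    have "(k has_real_derivative c*((1/(1+x) + 1/(1-x))/2) - c*((1/(1+c*x) + 1/(1-c*x))/2)) (at x)"
    proof -
      have nz: "1+x \<noteq> 0" "1-x \<noteq> 0" "1+c*x \<noteq> 0" "1-c*x \<noteq> 0" using x1 cx1 by auto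
      show ?thesis
      unfolding k_def using x1 cx1
      apply (auto intro!: derivative_eq_intros)
      using nz apply (simp add: divide_simps)
      apply (simp add: algebra_simps)
      done
    qed
    moreover have "c*((1/(1+c*x) + 1/(1-c*x))/2) \<le> c*((1/(1+x) + 1/(1-x))/2)"
    proof -
      have e1: "1/(1+x) + 1/(1-x) = 2/(1-x*x)" using x1 by (simp add: field_simps)
      have e2: "1/(1+c*x) + 1/(1-c*x) = 2/(1-(c*x)*(c*x))" using cx1 by (simp add: field_simps)
      have "(c*x)*(c*x) \<le> x*x"
      proof -
        have "(c*x)*(c*x) = (c*c)*(x*x)" by simp
        also have "\<dots> \<le> 1*(x*x)" using c by (intro mult_right_mono mult_le_one) auto
        finally show ?thesis by simp
      qed
      moreover have "0 < 1 - x*x"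
      proof -
        have "x*x = \<bar>x\<bar>*\<bar>x\<bar>" by (simp add: abs_mult_self_eq)
        also have "\<dots> < 1*1" using ax by (intro mult_strict_mono) auto
        finally show ?thesis by simp
      qed
      ultimately have "2/(1-(c*x)*(c*x)) \<le> 2/(1-x*x)" by (intro divide_left_mono) auto
      then have "1/(1+c*x) + 1/(1-c*x) \<le> 1/(1+x) + 1/(1-x)" unfolding e1 e2 .
      then show ?thesis using c by (intro mult_left_mono divide_right_mono) auto
    qed
    ultimately show "\<exists>y. (k has_real_derivative y) (at x) \<and> 0 \<le> y" by auto
  qed
  then show ?thesis unfolding k_def .
qed

lemma sdpi_core:
  fixes c w z :: real
  assumes c: "0 < c" "c < 1" and w: "\<bar>w\<bar> < 1" and z: "\<bar>z\<bar> \<le> 1"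
  shows "dd (c*z) (c*w) \<le> c^2 * dd z w"
proof -
  define L where "L u = (ln(1+u) - ln(1-u))/2" for u :: real
  define k where "k u = c * L u - L (c*u)" for u
  define E where "E z = c^2 * ((NN(1+z) + NN(1-z))/2 - (1+z)/2*ln(1+w) - (1-z)/2*ln(1-w))
     - ((NN(1+c*z) + NN(1-c*z))/2 - (1+c*z)/2*ln(1+c*w) - (1-c*z)/2*ln(1-c*w))" for z
  have cle: "\<bar>c*u\<bar> \<le> \<bar>u\<bar>" for u using c by (simp add: abs_mult mult_left_le_one_le)
  have cw: "\<bar>c*w\<bar> < 1" using cle[of w] w by linarith
  have cz: "\<bar>c*z\<bar> \<le> 1" using cle[of z] z by linarith
  have Ez: "E z = c^2 * dd z w - dd (c*z) (c*w)"
    unfolding E_def dd_NN[OF w z] dd_NN[OF cw cz] by simp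
  have Ew: "E w = 0"
    unfolding E_def NN_def by (simp add: field_simps)
  have cont: "continuous_on {-1..1} E"
    unfolding E_def
  proof (intro continuous_intros)
    fix x :: real assume "x \<in> {-1..1}"
    then have "\<bar>x\<bar> \<le> 1" by auto
    moreover have "\<bar>c*x\<bar> \<le> 1" using cle[of x] calculation by linarith
    ultimately show "0 \<le> 1 + x" "0 \<le> 1 - x" "0 \<le> 1 + c*x" "0 \<le> 1 - c*x"
      by (auto simp: abs_le_iff)
  qed auto
  have deriv: "(E has_real_derivative c * (k x - k w)) (at x)" if x: "-1 < x" "x < 1" for x
  proof -
    have "\<bar>c*x\<bar> < 1" using cle[of x] x by linarith
    then have cx1: "0 < 1 + c*x" "0 < 1 - c*x" by (auto simp: abs_less_iff)
    have nz: "1+x \<noteq> 0" "1-x \<noteq> 0" "1+c*x \<noteq> 0" "1-c*x \<noteq> 0" using x cx1 by auto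
    show ?thesis
      unfolding E_def NN_def k_def L_def using x cx1
      apply (auto intro!: derivative_eq_intros)
      using nz apply (simp add: divide_simps)
      apply (simp add: algebra_simps power2_eq_square)
      done
  qed
  have kx: "k w \<le> k x" if "w \<le> x" "x < 1" for x
    using k_mono[OF c, of w x] that w unfolding k_def L_def by auto
  have kx2: "k x \<le> k w" if "x \<le> w" "-1 < x" for x
    using k_mono[OF c, of x w] that w unfolding k_def L_def by auto
  have "E z \<ge> 0"
  proof (cases "w \<le> z")
    case True
    have "E w \<le> E z"
    proof (rule DERIV_nonneg_imp_increasing_open[OF True])
      fix x assume "w < x" "x < z"
      then have "-1 < x" "x < 1" using w z by auto
      then show "\<exists>y. (E has_real_derivative y) (at x) \<and> 0 \<le> y"
        using deriv kx[of x] \<open>w < x\<close> c by (intro exI[of _ "c * (k x - k w)"]) auto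
    next
      show "continuous_on {w..z} E" using w z by (intro continuous_on_subset[OF cont]) auto
    qed
    then show ?thesis using Ew by simp
  next
    case False
    then have zw: "z \<le> w" by simp
    have "E w \<le> E z"
    proof (rule DERIV_nonpos_imp_decreasing_open[OF zw])
      fix x assume "z < x" "x < w"
      then have "-1 < x" "x < 1" using w z by auto
      then show "\<exists>y. (E has_real_derivative y) (at x) \<and> y \<le> 0"
        using deriv kx2[of x] \<open>x < w\<close> c
        by (intro exI[of _ "c * (k x - k w)"]) (auto simp: mult_le_0_iff)
    next
      show "continuous_on {z..w} E" using w z by (intro continuous_on_subset[OF cont]) auto
    qed
    then show ?thesis using Ew by simp
  qed
  then show ?thesis using Ez by simp
qed

lemma xlr_same: "xlr r r = 0" by (cases "r = 0") (simp_all add: xlr_def)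
lemma xlr_zero: "xlr 0 q = 0" by (simp add: xlr_def)
lemma xlr_scale: "K \<noteq> 0 \<Longrightarrow> xlr (K*r) (K*q) = K * xlr r q" unfolding xlr_def by simp
lemma dd_same: "dd z z = 0" by (simp add: dd_def xlr_same)
lemma dd_neg: "dd (-z) (-w) = dd z w" by (simp add: dd_def add.commute)

lemma sdpi:
  fixes l z w :: real
  assumes l: "\<bar>l\<bar> \<le> 1" and z: "\<bar>z\<bar> \<le> 1" and w: "\<bar>w\<bar> \<le> 1" and zw: "\<bar>w\<bar> = 1 \<Longrightarrow> z = w"
  shows "dd (l*z) (l*w) \<le> l^2 * dd z w"
proof (cases "\<bar>w\<bar> = 1")
  case True then show ?thesis using zw by (simp add: dd_same)
next
  case False
  then have w1: "\<bar>w\<bar> < 1" using w by simp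
  consider "l = 0" | "0 < l \<and> l < 1" | "l = 1" | "-1 < l \<and> l < 0" | "l = -1" using l by linarith
  then show ?thesis
  proof cases
    case 1 then show ?thesis by (simp add: dd_same)
  next
    case 2 then show ?thesis using sdpi_core[of l w z] w1 z by auto
  next
    case 3 then show ?thesis by simp
  next
    case 4
    have "dd ((-l)*(-z)) ((-l)*(-w)) \<le> (-l)^2 * dd (-z) (-w)"
      using 4 w1 z by (intro sdpi_core) auto
    then show ?thesis by (simp add: dd_neg)
  next
    case 5 then show ?thesis using dd_neg[of z w] by simp
  qed
qed

lemma aux_sq: "(m::real) \<noteq> 0 \<Longrightarrow> m * (t/m)^2 = t^2/m"
  by (simp add: power2_eq_square field_simps)
lemma aux2: "(u::real) \<noteq> 0 \<Longrightarrow> v \<noteq> 0 \<Longrightarrow> (v*u)*((A/u)*(B/v)) = A*B"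
  by (simp add: field_simps)
lemma aux3: "(u::real) \<noteq> 0 \<Longrightarrow> (v*u)*((A/u)*C) = v*(A*C)"
  by (simp add: field_simps)

definition Ofun :: "real \<Rightarrow> real \<Rightarrow> real \<Rightarrow> real \<Rightarrow> real \<Rightarrow> real \<Rightarrow> real" where
  "Ofun a b p0 p1 q0 q1 = xlr (p0*a + p1*b) ((p0+p1)*(q0*a + q1*b))
     + xlr (p0*b + p1*a) ((p0+p1)*(q0*b + q1*a))"

lemma Ofun_eq:
  assumes s: "p0+p1 > 0" and m: "a+b > 0" and q: "q0+q1 = 1"
  shows "Ofun a b p0 p1 q0 q1 = (p0+p1)*(a+b) *
    dd (((a-b)/(a+b)) * ((p0-p1)/(p0+p1))) (((a-b)/(a+b))*(q0-q1))"
proof -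
  define K where "K = (p0+p1)*(a+b)"
  have K: "K \<noteq> 0" using s m unfolding K_def by simp
  have q1: "q1 = 1 - q0" using q by simp
  define X where "X = ((a-b)/(a+b)) * ((p0-p1)/(p0+p1))"
  define Y where "Y = ((a-b)/(a+b)) * (q0-q1)"
  have tX: "K * X = (a-b)*(p0-p1)" using s m unfolding K_def X_def by (intro aux2) auto
  have tY: "K * Y = (p0+p1)*((a-b)*(q0-q1))" using s m unfolding K_def Y_def by (intro aux3) auto
  have e1: "p0*a + p1*b = K * ((1 + X)/2)"
  proof -
    have "K * ((1 + X)/2) = (K + K*X)/2" by (simp add: algebra_simps)
    also have "\<dots> = p0*a + p1*b" unfolding tX unfolding K_def by (simp add: algebra_simps)
    finally show ?thesis by simp
  qed
  have e3: "p0*b + p1*a = K * ((1 - X)/2)"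
  proof -
    have "K * ((1 - X)/2) = (K - K*X)/2" by (simp add: algebra_simps)
    also have "\<dots> = p0*b + p1*a" unfolding tX unfolding K_def by (simp add: algebra_simps)
    finally show ?thesis by simp
  qed
  have e2: "(p0+p1)*(q0*a + q1*b) = K * ((1 + Y)/2)"
  proof -
    have "K * ((1 + Y)/2) = (K + K*Y)/2" by (simp add: algebra_simps)
    also have "\<dots> = (p0+p1)*(q0*a + q1*b)" unfolding tY unfolding K_def q1 by (simp add: field_simps)
    finally show ?thesis by simp
  qed
  have e4: "(p0+p1)*(q0*b + q1*a) = K * ((1 - Y)/2)"
  proof -
    have "K * ((1 - Y)/2) = (K - K*Y)/2" by (simp add: algebra_simps)
    also have "\<dots> = (p0+p1)*(q0*b + q1*a)" unfolding tY unfolding K_def q1 by (simp add: field_simps)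
    finally show ?thesis by simp
  qed
  have "Ofun a b p0 p1 q0 q1 = K * dd X Y"
    unfolding Ofun_def e1 e2 e3 e4 xlr_scale[OF K] dd_def by (simp add: distrib_left)
  then show ?thesis unfolding K_def X_def Y_def .
qed

lemma Ofun_same:
  assumes q: "q0+q1 = 1"
  shows "Ofun a a p0 p1 q0 q1 = 0"
proof -
  have e1: "p0*a + p1*a = (p0+p1)*a" by (simp add: algebra_simps)
  have e2: "(p0+p1)*(q0*a + q1*a) = (p0+p1)*a"
    using q by (metis distrib_right mult_1)
  show ?thesis unfolding Ofun_def e1 e2 by (simp add: xlr_same)
qed

lemma Ofun_upper:
  fixes a b p0 p1 q0 q1 :: real
  assumes ab: "a \<ge> 0" "b \<ge> 0" and p: "p0 \<ge> 0" "p1 \<ge> 0" "p0+p1 = 1"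
    and q: "q0 \<ge> 0" "q1 \<ge> 0" "q0+q1 = 1" and ac: "q0 = 0 \<Longrightarrow> p0 = 0" "q1 = 0 \<Longrightarrow> p1 = 0"
  shows "Ofun a b p0 p1 q0 q1 \<le> (a-b)^2/(a+b) * (xlr p0 q0 + xlr p1 q1)"
proof (cases "a+b = 0")
  case True
  then have "a = 0" "b = 0" using ab by auto
  then show ?thesis using Ofun_same[OF q(3), of 0 p0 p1] by simp
next
  case False
  then have m: "a+b > 0" using ab by simp
  define th where "th = (a-b)/(a+b)"
  have O: "Ofun a b p0 p1 q0 q1 = (a+b) * dd (th*(p0-p1)) (th*(q0-q1))"
    using Ofun_eq[OF _ m q(3), of p0 p1] p unfolding th_def by simp
  have D: "dd (p0-p1) (q0-q1) = xlr p0 q0 + xlr p1 q1"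
  proof -
    have ee: "(1 + (p0-p1))/2 = p0" "(1 - (p0-p1))/2 = p1" "(1 + (q0-q1))/2 = q0" "(1 - (q0-q1))/2 = q1"
      using p q by auto
    show ?thesis unfolding dd_def ee ..
  qed
  have th1: "\<bar>th\<bar> \<le> 1" unfolding th_def using ab m by (auto simp: abs_le_iff divide_le_eq le_divide_eq)
  have "dd (th*(p0-p1)) (th*(q0-q1)) \<le> th^2 * dd (p0-p1) (q0-q1)"
  proof (rule sdpi[OF th1])
    show "\<bar>p0-p1\<bar> \<le> 1" "\<bar>q0-q1\<bar> \<le> 1" using p q by auto
    show "p0 - p1 = q0 - q1" if "\<bar>q0 - q1\<bar> = 1"
    proof -
      have "q0 = 0 \<or> q1 = 0" using that q by (auto simp: abs_if split: if_splits)
      then show ?thesis using ac p q by auto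
    qed
  qed
  then have "(a+b) * dd (th*(p0-p1)) (th*(q0-q1)) \<le> (a+b) * (th^2 * dd (p0-p1) (q0-q1))"
    using m by (intro mult_left_mono) auto
  also have "(a+b) * th^2 = (a-b)^2/(a+b)" unfolding th_def using m by (intro aux_sq) auto
  then have "(a+b) * (th^2 * dd (p0-p1) (q0-q1)) = (a-b)^2/(a+b) * (xlr p0 q0 + xlr p1 q1)"
    unfolding D by (metis mult.assoc)
  finally show ?thesis unfolding O .
qed

lemma Ofun_peru:
  fixes aF bF aG bG p0 p1 q0 q1 :: real
  assumes F: "aF \<ge> 0" "bF \<ge> 0" "aF+bF > 0" and G: "aG \<ge> 0" "bG \<ge> 0" "aG+bG > 0"
    and kap: "(aF-bF)^2/(aF+bF) = (aG-bG)^2/(aG+bG)"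
    and th: "\<bar>aG-bG\<bar>/(aG+bG) \<le> \<bar>aF-bF\<bar>/(aF+bF)"
    and p: "p0 \<ge> 0" "p1 \<ge> 0" and q: "q0 \<ge> 0" "q1 \<ge> 0" "q0+q1 = 1"
    and ac: "q0 = 0 \<Longrightarrow> p0 = 0" "q1 = 0 \<Longrightarrow> p1 = 0"
  shows "Ofun aG bG p0 p1 q0 q1 \<le> Ofun aF bF p0 p1 q0 q1"
proof (cases "p0+p1 = 0")
  case True
  then have "p0 = 0" "p1 = 0" using p by auto
  then show ?thesis by (simp add: Ofun_def xlr_zero)
next
  case False
  then have s: "p0+p1 > 0" using p by simp
  define tF where "tF = (aF-bF)/(aF+bF)"
  define tG where "tG = (aG-bG)/(aG+bG)"
  define x where "x = (p0-p1)/(p0+p1)"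
  define y where "y = q0-q1"
  have OF: "Ofun aF bF p0 p1 q0 q1 = (p0+p1)*(aF+bF) * dd (tF*x) (tF*y)"
    unfolding tF_def x_def y_def by (rule Ofun_eq[OF s F(3) q(3)])
  have OG: "Ofun aG bG p0 p1 q0 q1 = (p0+p1)*(aG+bG) * dd (tG*x) (tG*y)"
    unfolding tG_def x_def y_def by (rule Ofun_eq[OF s G(3) q(3)])
  have atF: "\<bar>tF\<bar> = \<bar>aF-bF\<bar>/(aF+bF)" unfolding tF_def using F by (simp add: abs_divide)
  have atG: "\<bar>tG\<bar> = \<bar>aG-bG\<bar>/(aG+bG)" unfolding tG_def using G by (simp add: abs_divide)
  have tGF: "\<bar>tG\<bar> \<le> \<bar>tF\<bar>" using th atF atG by simp
  have tF1: "\<bar>tF\<bar> \<le> 1" unfolding atF using F by (auto simp: divide_le_eq_1)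
  have x1: "\<bar>x\<bar> \<le> 1" unfolding x_def using s p by (auto simp: abs_divide divide_le_eq_1)
  have y1: "\<bar>y\<bar> \<le> 1" unfolding y_def using q by auto
  show ?thesis
  proof (cases "tF = 0")
    case True
    then have "tG = 0" using tGF by simp
    then show ?thesis unfolding OF OG using True by (simp add: dd_same)
  next
    case False
    define l where "l = tG/tF"
    have tG: "tG = l * tF" unfolding l_def using False by simp
    have l1: "\<bar>l\<bar> \<le> 1" unfolding l_def using tGF False by (simp add: abs_divide divide_le_eq_1)
    have sd: "dd (l*(tF*x)) (l*(tF*y)) \<le> l^2 * dd (tF*x) (tF*y)"
    proof (rule sdpi[OF l1])
      show "\<bar>tF*x\<bar> \<le> 1" using tF1 x1 by (simp add: abs_mult mult_le_one)
      show "\<bar>tF*y\<bar> \<le> 1" using tF1 y1 by (simp add: abs_mult mult_le_one)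
      show "tF*x = tF*y" if "\<bar>tF*y\<bar> = 1"
      proof -
        have "\<bar>y\<bar> = 1"
        proof (rule ccontr)
          assume "\<bar>y\<bar> \<noteq> 1"
          then have "\<bar>y\<bar> < 1" using y1 by simp
          then have "\<bar>tF\<bar> * \<bar>y\<bar> < 1 * 1" using tF1 False by (intro mult_le_less_imp_less) auto
          then show False using that by (simp add: abs_mult)
        qed
        then have "y = 1 \<or> y = -1" by auto
        then have "x = y"
        proof
          assume "y = 1"
          then have "q1 = 0" using q unfolding y_def by simp
          then have "p1 = 0" using ac by simp
          then show "x = y" unfolding x_def using s \<open>y = 1\<close> by simp
        next
          assume "y = -1"
          then have "q0 = 0" using q unfolding y_def by simp
          then have "p0 = 0" using ac by simp
          then show "x = y" unfolding x_def using s \<open>y = -1\<close> by simp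
        qed
        then show ?thesis by simp
      qed
    qed
    have kF: "(aF-bF)^2/(aF+bF) = (aF+bF) * tF^2" unfolding tF_def using F by (intro aux_sq[symmetric]) auto
    have kG: "(aG-bG)^2/(aG+bG) = (aG+bG) * tG^2" unfolding tG_def using G by (intro aux_sq[symmetric]) auto
    have "(aF+bF) * tF^2 = ((aG+bG) * l^2) * tF^2" using kap kF kG tG by (simp add: power_mult_distrib)
    then have mass: "(aG+bG) * l^2 = aF+bF" using False by simp
    have "Ofun aG bG p0 p1 q0 q1 = (p0+p1)*(aG+bG) * dd (l*(tF*x)) (l*(tF*y))"
      unfolding OG tG by (simp add: mult.assoc)
    also have "\<dots> \<le> (p0+p1)*(aG+bG) * (l^2 * dd (tF*x) (tF*y))"
      using s G by (intro mult_left_mono sd) auto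
    also have "\<dots> = (p0+p1) * ((aG+bG) * l^2) * dd (tF*x) (tF*y)" by (simp add: mult.assoc)
    also have "\<dots> = Ofun aF bF p0 p1 q0 q1" unfolding OF mass ..
    finally show ?thesis .
  qed
qed

lemma biso1_facts:
  assumes "biso1 W"
  shows "W 0 (-1) \<ge> 0" "W 0 0 \<ge> 0" "W 0 1 \<ge> 0" "W 1 (-1) = W 0 1" "W 1 0 = W 0 0"
    "W 1 1 = W 0 (-1)" "W 0 (-1) + W 0 0 + W 0 1 = 1"
proof -
  have c: "pmf_on {-1, 0, 1} (W 0)" and s: "\<forall>y\<in>{-1, 0, 1}. W 0 y = W 1 (- y)"
    using assms unfolding biso1_def channel_def by auto
  from c show "W 0 (-1) \<ge> 0" "W 0 0 \<ge> 0" "W 0 1 \<ge> 0" "W 0 (-1) + W 0 0 + W 0 1 = 1"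
    unfolding pmf_on_def by auto
  from s show "W 1 (-1) = W 0 1" "W 1 0 = W 0 0" "W 1 1 = W 0 (-1)" by auto
qed

lemma sum_filter_pos:
  fixes p q :: "'a \<Rightarrow> real"
  assumes "finite A" "\<forall>a\<in>A. 0 \<le> p a"
  shows "(\<Sum>a\<in>{a\<in>A. 0 < p a}. p a * ln (p a / q a)) = (\<Sum>a\<in>A. p a * ln (p a / q a))"
proof (rule sum.mono_neutral_left)
  show "\<forall>i\<in>A - {a \<in> A. 0 < p a}. p i * ln (p i / q i) = 0"
  proof
    fix i assume "i \<in> A - {a \<in> A. 0 < p a}"
    then have "p i = 0" using assms(2) by force
    then show "p i * ln (p i / q i) = 0" by simp
  qed
qed (use assms in auto)

lemma filt_sum2:
  fixes g h :: "'u \<Rightarrow> 'y \<Rightarrow> real"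
  assumes "finite A" "finite B" "\<forall>u\<in>A. \<forall>y\<in>B. 0 \<le> g u y"
  shows "(\<Sum>(u, y)\<in>{(u, y) \<in> A \<times> B. 0 < g u y}. g u y * ln (g u y / h u y))
       = (\<Sum>u\<in>A. \<Sum>y\<in>B. g u y * ln (g u y / h u y))"
proof -
  have "(\<Sum>(u, y)\<in>{(u, y) \<in> A \<times> B. 0 < g u y}. g u y * ln (g u y / h u y))
      = (\<Sum>(u, y)\<in>A \<times> B. g u y * ln (g u y / h u y))"
  proof (rule sum.mono_neutral_left)
    show "finite (A \<times> B)" using assms by auto
    show "{(u, y) \<in> A \<times> B. 0 < g u y} \<subseteq> A \<times> B" by auto
    show "\<forall>i\<in>A \<times> B - {(u, y) \<in> A \<times> B. 0 < g u y}. (case i of (u, y) \<Rightarrow> g u y * ln (g u y / h u y)) = 0"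
    proof
      fix i assume i: "i \<in> A \<times> B - {(u, y) \<in> A \<times> B. 0 < g u y}"
      obtain u y where "i = (u, y)" by force
      with i assms(3) have "g u y = 0" by force
      then show "(case i of (u, y) \<Rightarrow> g u y * ln (g u y / h u y)) = 0" using \<open>i = (u, y)\<close> by simp
    qed
  qed
  also have "\<dots> = (\<Sum>u\<in>A. \<Sum>y\<in>B. g u y * ln (g u y / h u y))"
    by (rule sum.cartesian_product[symmetric])
  finally show ?thesis .
qed

lemma MI_eq:
  assumes W: "biso1 W" and U: "finite U" and P: "pmf_on (U \<times> {0,1}) (\<lambda>(u,x). PUX u x)"
  shows "mutual_info U {0,1} {-1,0,1} W PUX =
    (\<Sum>u\<in>U. Ofun (W 0 (-1)) (W 0 1) (PUX u 0) (PUX u 1) (\<Sum>v\<in>U. PUX v 0) (\<Sum>v\<in>U. PUX v 1))"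
proof -
  note wf = biso1_facts[OF W]
  define a where "a = W 0 (-1)"
  define b where "b = W 0 1"
  define e where "e = W 0 0"
  define A where "A = (\<Sum>v\<in>U. PUX v 0)"
  define B where "B = (\<Sum>v\<in>U. PUX v 1)"
  have nn: "\<forall>u\<in>U. 0 \<le> PUX u 0 \<and> 0 \<le> PUX u 1" using P unfolding pmf_on_def by auto
  have tot: "(\<Sum>(u,x)\<in>U \<times> {0::nat,1}. PUX u x) = 1" using P unfolding pmf_on_def by auto
  have AB: "A + B = 1"
  proof -
    have "(\<Sum>(u,x)\<in>U \<times> {0::nat,1}. PUX u x) = (\<Sum>u\<in>U. \<Sum>x\<in>{0::nat,1}. PUX u x)"
      by (rule sum.cartesian_product[symmetric])
    also have "\<dots> = (\<Sum>u\<in>U. PUX u 0 + PUX u 1)" by simp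
    also have "\<dots> = A + B" unfolding A_def B_def by (rule sum.distrib)
    finally show ?thesis using tot by simp
  qed
  define PUY where "PUY = (\<lambda>u y. \<Sum>x\<in>{0::nat,1}. PUX u x * W x y)"
  define PU where "PU = (\<lambda>u. \<Sum>x\<in>{0::nat,1}. PUX u x)"
  define PY where "PY = (\<lambda>y. \<Sum>u\<in>U. PUY u y)"
  have MI: "mutual_info U {0,1} {-1,0,1} W PUX =
     (\<Sum>(u, y)\<in>{(u, y) \<in> U \<times> {-1,0,1}. 0 < PUY u y}. PUY u y * ln (PUY u y / (PU u * PY y)))"
    unfolding mutual_info_def Let_def PUY_def PU_def PY_def by (rule refl)
  have PUY1: "PUY u (-1) = PUX u 0 * a + PUX u 1 * b" for u
    unfolding PUY_def a_def b_def using wf by simp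
  have PUY2: "PUY u 0 = (PUX u 0 + PUX u 1) * e" for u
    unfolding PUY_def e_def using wf by (simp add: algebra_simps)
  have PUY3: "PUY u 1 = PUX u 0 * b + PUX u 1 * a" for u
    unfolding PUY_def a_def b_def using wf by simp
  have PU: "PU u = PUX u 0 + PUX u 1" for u unfolding PU_def by simp
  have PY1: "PY (-1) = A * a + B * b"
    unfolding PY_def PUY1 A_def B_def by (simp add: sum.distrib sum_distrib_right)
  have PY2: "PY 0 = e"
  proof -
    have "PY 0 = (A + B) * e" unfolding PY_def PUY2 A_def B_def by (simp add: sum.distrib sum_distrib_right[symmetric])
    then show ?thesis using AB by simp
  qed
  have PY3: "PY 1 = A * b + B * a"
    unfolding PY_def PUY3 A_def B_def by (simp add: sum.distrib sum_distrib_right)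
  have "\<forall>u\<in>U. \<forall>y\<in>{-1,0,1}. 0 \<le> PUY u y"
    using nn wf unfolding PUY_def by auto
  then have MI2: "mutual_info U {0,1} {-1,0,1} W PUX =
     (\<Sum>u\<in>U. \<Sum>y\<in>{-1,0,1}. PUY u y * ln (PUY u y / (PU u * PY y)))"
    unfolding MI using U by (intro filt_sum2) auto
  have "(\<Sum>y\<in>{-1,0,1}. PUY u y * ln (PUY u y / (PU u * PY y))) = Ofun a b (PUX u 0) (PUX u 1) A B" for u
  proof -
    have "(\<Sum>y\<in>{-1,0,1}. PUY u y * ln (PUY u y / (PU u * PY y)))
       = PUY u (-1) * ln (PUY u (-1) / (PU u * PY (-1))) + PUY u 0 * ln (PUY u 0 / (PU u * PY 0))
         + PUY u 1 * ln (PUY u 1 / (PU u * PY 1))" by simp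
    also have "PUY u 0 * ln (PUY u 0 / (PU u * PY 0)) = 0"
      unfolding PUY2 PU PY2 by (simp add: xlr_same[unfolded xlr_def])
    finally show ?thesis unfolding Ofun_def xlr_def PUY1 PUY3 PU PY1 PY3 by (simp add: algebra_simps)
  qed
  then show ?thesis unfolding MI2 a_def b_def A_def B_def by simp
qed

lemma pmf_UX:
  assumes P: "pmf_on (U \<times> {0,1}) (\<lambda>(u,x). PUX u x)"
  shows "\<forall>u\<in>U. 0 \<le> PUX u 0 \<and> 0 \<le> PUX u (1::nat)" "(\<Sum>v\<in>U. PUX v 0) + (\<Sum>v\<in>U. PUX v 1) = (1::real)"
proof -
  show "\<forall>u\<in>U. 0 \<le> PUX u 0 \<and> 0 \<le> PUX u (1::nat)" using P unfolding pmf_on_def by auto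
  have tot: "(\<Sum>(u,x)\<in>U \<times> {0::nat,1}. PUX u x) = 1" using P unfolding pmf_on_def by auto
  have "(\<Sum>(u,x)\<in>U \<times> {0::nat,1}. PUX u x) = (\<Sum>u\<in>U. \<Sum>x\<in>{0::nat,1}. PUX u x)"
    by (rule sum.cartesian_product[symmetric])
  also have "\<dots> = (\<Sum>u\<in>U. PUX u 0 + PUX u 1)" by simp
  also have "\<dots> = (\<Sum>v\<in>U. PUX v 0) + (\<Sum>v\<in>U. PUX v 1)" by (rule sum.distrib)
  finally show "(\<Sum>v\<in>U. PUX v 0) + (\<Sum>v\<in>U. PUX v 1) = (1::real)" using tot by simp
qed

lemma LN_pos:
  assumes F: "biso1 F" and G: "biso1 G"
    and mF: "F 0 (-1) + F 0 1 > 0" and mG: "G 0 (-1) + G 0 1 > 0"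
    and kap: "(F 0 (-1) - F 0 1)^2/(F 0 (-1) + F 0 1) = (G 0 (-1) - G 0 1)^2/(G 0 (-1) + G 0 1)"
    and th: "\<bar>G 0 (-1) - G 0 1\<bar>/(G 0 (-1) + G 0 1) \<le> \<bar>F 0 (-1) - F 0 1\<bar>/(F 0 (-1) + F 0 1)"
  shows "less_noisy {0,1} {-1,0,1} F {-1,0,1} G"
  unfolding less_noisy_def
proof (intro allI impI, elim conjE)
  fix U :: "nat set" and PUX :: "nat \<Rightarrow> nat \<Rightarrow> real"
  assume U: "finite U" and P: "pmf_on (U \<times> {0,1}) (\<lambda>(u,x). PUX u x)"
  note nn = pmf_UX(1)[OF P] and AB = pmf_UX(2)[OF P]
  have Anneg: "\<forall>v\<in>U. 0 \<le> PUX v x" if "x \<in> {0,1}" for x using nn that by auto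
  show "mutual_info U {0,1} {-1,0,1} G PUX \<le> mutual_info U {0,1} {-1,0,1} F PUX"
    unfolding MI_eq[OF G U P] MI_eq[OF F U P]
  proof (rule sum_mono)
    fix u assume u: "u \<in> U"
    have le: "PUX u x \<le> (\<Sum>v\<in>U. PUX v x)" if "x \<in> {0,1}" for x
      using Anneg[OF that] u U by (intro member_le_sum) auto
    have s0: "0 \<le> (\<Sum>v\<in>U. PUX v x)" if "x \<in> {0,1}" for x
      using Anneg[OF that] by (intro sum_nonneg) auto
    note f = biso1_facts[OF F] and g = biso1_facts[OF G]
    show "Ofun (G 0 (-1)) (G 0 1) (PUX u 0) (PUX u 1) (\<Sum>v\<in>U. PUX v 0) (\<Sum>v\<in>U. PUX v 1)
       \<le> Ofun (F 0 (-1)) (F 0 1) (PUX u 0) (PUX u 1) (\<Sum>v\<in>U. PUX v 0) (\<Sum>v\<in>U. PUX v 1)"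
    proof (rule Ofun_peru[OF f(1) f(3) mF g(1) g(3) mG kap th])
      show "0 \<le> PUX u 0" "0 \<le> PUX u 1" using nn u by auto
      show "0 \<le> (\<Sum>v\<in>U. PUX v 0)" "0 \<le> (\<Sum>v\<in>U. PUX v 1)" using s0 by auto
      show "(\<Sum>v\<in>U. PUX v 0) + (\<Sum>v\<in>U. PUX v 1) = 1" by (rule AB)
      show "PUX u 0 = 0" if "(\<Sum>v\<in>U. PUX v 0) = 0" using le[of 0] that nn u by force
      show "PUX u 1 = 0" if "(\<Sum>v\<in>U. PUX v 1) = 0" using le[of 1] that nn u by force
    qed
  qed
qed

lemma LN_zero:
  assumes F: "biso1 F" and G: "biso1 G" and eF: "F 0 (-1) = F 0 1" and eG: "G 0 (-1) = G 0 1"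
  shows "less_noisy {0,1} {-1,0,1} F {-1,0,1} G"
  unfolding less_noisy_def
proof (intro allI impI, elim conjE)
  fix U :: "nat set" and PUX :: "nat \<Rightarrow> nat \<Rightarrow> real"
  assume U: "finite U" and P: "pmf_on (U \<times> {0,1}) (\<lambda>(u,x). PUX u x)"
  note AB = pmf_UX(2)[OF P]
  show "mutual_info U {0,1} {-1,0,1} G PUX \<le> mutual_info U {0,1} {-1,0,1} F PUX"
    unfolding MI_eq[OF G U P] MI_eq[OF F U P] eF eG Ofun_same[OF AB] by simp
qed

lemma pmf01: "pmf_on {0::nat,1} p \<Longrightarrow> p 0 \<ge> 0 \<and> p 1 \<ge> 0 \<and> p 0 + p 1 = 1"
  by (simp add: pmf_on_def)

lemma KL_in:
  assumes p: "pmf_on {0::nat,1} p"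
  shows "KL {0::nat,1} p q = (if (0 < p 0 \<and> q 0 = 0) \<or> (0 < p 1 \<and> q 1 = 0) then \<infinity>
            else ereal (xlr (p 0) (q 0) + xlr (p 1) (q 1)))"
proof -
  have "(\<Sum>a\<in>{a\<in>{0::nat,1}. 0 < p a}. p a * ln (p a / q a)) = (\<Sum>a\<in>{0::nat,1}. p a * ln (p a / q a))"
    using p by (intro sum_filter_pos) (auto simp: pmf_on_def)
  then show ?thesis unfolding KL_def by (simp add: xlr_def)
qed

lemma KL_out:
  assumes W: "biso1 W" and p: "pmf_on {0::nat,1} p" and q: "pmf_on {0::nat,1} q"
    and nc: "\<not> ((0 < p 0 \<and> q 0 = 0) \<or> (0 < p 1 \<and> q 1 = 0))"
  shows "KL {-1,0,1} (out_dist {0,1} W p) (out_dist {0,1} W q) = ereal (Ofun (W 0 (-1)) (W 0 1) (p 0) (p 1) (q 0) (q 1))"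
proof -
  note wf = biso1_facts[OF W]
  note pp = pmf01[OF p] and qq = pmf01[OF q]
  define op where "op = out_dist {0,1} W p"
  define oq where "oq = out_dist {0,1} W q"
  have od: "out_dist {0,1} W r y = r 0 * W 0 y + r 1 * W 1 y" for r y unfolding out_dist_def by simp
  have Wn: "\<forall>y\<in>{-1,0,1}. 0 \<le> W 0 y \<and> 0 \<le> W 1 y" using wf by auto
  have opn: "\<forall>y\<in>{-1,0,1}. 0 \<le> op y" using Wn pp unfolding op_def od by auto
  have noinf: "\<not> (\<exists>y\<in>{-1,0,1}. 0 < op y \<and> oq y = 0)"
  proof
    assume "\<exists>y\<in>{-1,0,1}. 0 < op y \<and> oq y = 0"
    then obtain y where y: "y \<in> {-1,0,1}" "0 < op y" "oq y = 0" by blast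
    have w0: "0 \<le> W 0 y" and w1: "0 \<le> W 1 y" using Wn y(1) by auto
    have "q 0 * W 0 y + q 1 * W 1 y = 0" using y(3) unfolding oq_def od .
    moreover have "0 \<le> q 0 * W 0 y" "0 \<le> q 1 * W 1 y" using qq w0 w1 by auto
    ultimately have z: "q 0 * W 0 y = 0" "q 1 * W 1 y = 0" by linarith+
    have "p 0 * W 0 y = 0"
    proof (cases "q 0 = 0")
      case True then have "p 0 = 0" using nc pp by auto
      then show ?thesis by simp
    next
      case False then show ?thesis using z by simp
    qed
    moreover have "p 1 * W 1 y = 0"
    proof (cases "q 1 = 0")
      case True then have "p 1 = 0" using nc pp by auto
      then show ?thesis by simp
    next
      case False then show ?thesis using z by simp
    qed
    ultimately have "op y = 0" unfolding op_def od by (simp only: add_0_left)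
    then show False using y by simp
  qed
  have "KL {-1,0,1} op oq = ereal (\<Sum>y\<in>{-1,0,1}. op y * ln (op y / oq y))"
    unfolding KL_def using noinf sum_filter_pos[of "{-1,0,1}" op oq] opn by simp
  also have "(\<Sum>y\<in>{-1,0,1}. op y * ln (op y / oq y)) =
      op (-1) * ln (op (-1) / oq (-1)) + op 0 * ln (op 0 / oq 0) + op 1 * ln (op 1 / oq 1)" by simp
  also have "op 0 * ln (op 0 / oq 0) = 0"
  proof -
    have "op 0 = W 0 0" unfolding op_def od using wf pp by (simp add: distrib_right[symmetric])
    moreover have "oq 0 = W 0 0" unfolding oq_def od using wf qq by (simp add: distrib_right[symmetric])
    ultimately show ?thesis using xlr_same[of "W 0 0"] by (simp add: xlr_def)
  qed
  also have "op (-1) * ln (op (-1) / oq (-1)) + 0 + op 1 * ln (op 1 / oq 1) = Ofun (W 0 (-1)) (W 0 1) (p 0) (p 1) (q 0) (q 1)"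
    unfolding Ofun_def xlr_def op_def oq_def od using wf pp by (simp add: algebra_simps)
  finally show ?thesis unfolding op_def oq_def .
qed

lemma phi_lim:
  fixes c :: real assumes "c \<noteq> 0"
  shows "((\<lambda>s::real. ((1+c*s)/2 * ln(1+c*s) + (1-c*s)/2 * ln(1-c*s)) / ((1+s)/2*ln(1+s) + (1-s)/2*ln(1-s))) \<longlongrightarrow> c*c) (at_right 0)"
proof (cases "c > 0")
  case True then show ?thesis by real_asymp
next
  case False then have "c < 0" using assms by simp
  then show ?thesis by real_asymp
qed

lemma phi_ev: "eventually (\<lambda>s::real. 0 < s \<and> s < 1 \<and> 0 < (1+s)/2*ln(1+s) + (1-s)/2*ln(1-s)) (at_right 0)"
proof -
  have "eventually (\<lambda>s::real. 0 < s) (at_right 0)" by real_asymp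
  moreover have "eventually (\<lambda>s::real. s < 1) (at_right 0)" by real_asymp
  moreover have "eventually (\<lambda>s::real. 0 < (1+s)/2*ln(1+s) + (1-s)/2*ln(1-s)) (at_right 0)" by real_asymp
  ultimately show ?thesis by eventually_elim auto
qed

lemma eta_val:
  assumes W: "biso1 W"
  shows "eta_KL {0,1} {-1,0,1} W = ereal ((W 0 (-1) - W 0 1)^2 / (W 0 (-1) + W 0 1))"
proof -
  note wf = biso1_facts[OF W]
  define a where "a = W 0 (-1)"
  define b where "b = W 0 1"
  define k where "k = (a - b)^2 / (a + b)"
  have ab: "0 \<le> a" "0 \<le> b" using wf unfolding a_def b_def by auto
  define S where "S = {(p, q). pmf_on {0::nat,1} p \<and> pmf_on {0::nat,1} q \<and> 0 < KL {0::nat,1} p q \<and> KL {0::nat,1} p q < \<infinity>}"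
  define g where "g pq = KL {-1,0,1} (out_dist {0::nat,1} W (fst pq)) (out_dist {0,1} W (snd pq)) / KL {0::nat,1} (fst pq) (snd pq)" for pq
  have eta: "eta_KL {0,1} {-1,0,1} W = (SUP pq\<in>S. g pq)" unfolding eta_KL_def S_def g_def by (rule refl)
  define qh where "qh = (\<lambda>i::nat. (1::real)/2)"
  have qh: "pmf_on {0,1} qh" by (auto simp: pmf_on_def qh_def)
  have up: "g pq \<le> ereal k" if "pq \<in> S" for pq
  proof -
    obtain p q where pq: "pq = (p,q)" by force
    with that have p: "pmf_on {0,1} p" and q: "pmf_on {0,1} q" and pos: "0 < KL {0,1} p q"
      and fin: "KL {0,1} p q < \<infinity>" by (auto simp: S_def)
    have nc: "\<not> ((0 < p 0 \<and> q 0 = 0) \<or> (0 < p 1 \<and> q 1 = 0))"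
      using fin KL_in[OF p, of q] by (auto split: if_splits)
    define D where "D = xlr (p 0) (q 0) + xlr (p 1) (q 1)"
    have KLD: "KL {0,1} p q = ereal D" using KL_in[OF p, of q] nc unfolding D_def by simp
    have Dpos: "D > 0" using pos KLD by simp
    have O: "KL {-1,0,1} (out_dist {0,1} W p) (out_dist {0,1} W q) = ereal (Ofun a b (p 0) (p 1) (q 0) (q 1))"
      unfolding a_def b_def by (rule KL_out[OF W p q nc])
    note pp = pmf01[OF p] and qq = pmf01[OF q]
    have "Ofun a b (p 0) (p 1) (q 0) (q 1) \<le> k * D"
      unfolding k_def D_def
      by (rule Ofun_upper) (use ab pp qq nc in auto)
    then have "Ofun a b (p 0) (p 1) (q 0) (q 1) / D \<le> k" using Dpos by (simp add: pos_divide_le_eq)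
    then show ?thesis unfolding g_def pq using KLD O Dpos by simp
  qed
  have lo: "ereal k \<le> (SUP pq\<in>S. g pq)"
  proof (cases "a = b")
    case True
    define p1 where "p1 = (\<lambda>i::nat. if i = 0 then (1::real) else 0)"
    have pp: "pmf_on {0,1} p1" by (auto simp: pmf_on_def p1_def)
    have KLi: "KL {0,1} p1 qh = ereal (ln 2)" using KL_in[OF pp, of qh] by (simp add: p1_def qh_def xlr_def)
    have mem: "(p1, qh) \<in> S" using pp qh KLi by (simp add: S_def)
    have nc: "\<not> ((0 < p1 0 \<and> qh 0 = 0) \<or> (0 < p1 1 \<and> qh 1 = 0))" by (simp add: qh_def)
    have "KL {-1,0,1} (out_dist {0,1} W p1) (out_dist {0,1} W qh) = ereal 0"
      using KL_out[OF W pp qh nc] Ofun_same[of "qh 0" "qh 1" a "p1 0" "p1 1"] True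
      unfolding a_def b_def by (simp add: qh_def)
    then have "g (p1, qh) = 0" unfolding g_def using KLi by simp
    moreover have "k = 0" unfolding k_def using True by simp
    ultimately have "ereal k = g (p1, qh)" by simp
    also have "\<dots> \<le> (SUP pq\<in>S. g pq)" using mem by (rule SUP_upper)
    finally show ?thesis .
  next
    case False
    have m: "a + b > 0" using ab False by linarith
    define c where "c = (a - b)/(a + b)"
    have c0: "c \<noteq> 0" unfolding c_def using False m by simp
    define phi where "phi s = (1+s)/2 * ln(1+s) + (1-s)/2 * ln(1-s)" for s :: real
    define ps where "ps s = (\<lambda>i::nat. if i = 0 then (1+s)/2 else (1-s)/2)" for s :: real
    have lim: "((\<lambda>s. (a+b) * (phi (c*s) / phi s)) \<longlongrightarrow> (a+b)*(c*c)) (at_right 0)"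
      unfolding phi_def by (intro tendsto_mult tendsto_const phi_lim c0)
    have kk: "(a+b)*(c*c) = k" unfolding k_def c_def using aux_sq[of "a+b" "a-b"] m
      by (simp add: power2_eq_square)
    have gv: "(ps s, qh) \<in> S \<and> g (ps s, qh) = ereal ((a+b) * (phi (c*s) / phi s))"
      if s: "0 < s" "s < 1" "0 < phi s" for s
    proof -
      have pp: "pmf_on {0,1} (ps s)" using s by (auto simp: pmf_on_def ps_def field_simps)
      have nc: "\<not> ((0 < ps s 0 \<and> qh 0 = 0) \<or> (0 < ps s 1 \<and> qh 1 = 0))" by (simp add: qh_def)
      have e1: "((1+s)/2)/(1/2) = 1+s" "((1-s)/2)/(1/2) = 1-s" by simp_all
      have x1: "xlr ((1+s)/2) (1/2) = (1+s)/2 * ln (1+s)" "xlr ((1-s)/2) (1/2) = (1-s)/2 * ln (1-s)"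
        unfolding xlr_def e1 by simp_all
      have pv: "ps s 0 = (1+s)/2" "ps s 1 = (1-s)/2" "qh 0 = 1/2" "qh 1 = 1/2" by (simp_all add: ps_def qh_def)
      have "KL {0,1} (ps s) qh = ereal (xlr (ps s 0) (qh 0) + xlr (ps s 1) (qh 1))"
        using KL_in[OF pp, of qh] nc by simp
      then have KLi: "KL {0,1} (ps s) qh = ereal (phi s)"
        unfolding pv x1 phi_def .
      have mem: "(ps s, qh) \<in> S" using pp qh KLi s by (simp add: S_def)
      have "Ofun a b (ps s 0) (ps s 1) (qh 0) (qh 1) = (ps s 0 + ps s 1) * (a+b) *
          dd (c * ((ps s 0 - ps s 1)/(ps s 0 + ps s 1))) (c * (qh 0 - qh 1))"
        unfolding c_def by (rule Ofun_eq) (use m in \<open>auto simp: ps_def qh_def field_simps\<close>)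
      also have "\<dots> = (a+b) * dd (c*s) 0"
      proof -
        have h1: "ps s 0 + ps s 1 = 1" "ps s 0 - ps s 1 = s" "qh 0 - qh 1 = 0"
          by (simp_all add: ps_def qh_def field_simps)
        show ?thesis unfolding h1 by simp
      qed
      also have "dd (c*s) 0 = phi (c*s)"
      proof -
        have e2: "((1+c*s)/2)/(1/2) = 1+c*s" "((1-c*s)/2)/(1/2) = 1-c*s" by simp_all
        have "dd (c*s) 0 = xlr ((1+c*s)/2) (1/2) + xlr ((1-c*s)/2) (1/2)" unfolding dd_def by simp
        also have "\<dots> = phi (c*s)" unfolding xlr_def e2 phi_def ..
        finally show ?thesis .
      qed
      finally have O: "Ofun a b (ps s 0) (ps s 1) (qh 0) (qh 1) = (a+b) * phi (c*s)" .
      have "KL {-1,0,1} (out_dist {0,1} W (ps s)) (out_dist {0,1} W qh) = ereal ((a+b) * phi (c*s))"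
        using KL_out[OF W pp qh nc] O unfolding a_def b_def by simp
      then have "g (ps s, qh) = ereal ((a+b) * phi (c*s) / phi s)" unfolding g_def using KLi s by simp
      then show ?thesis using mem by simp
    qed
    have ev: "eventually (\<lambda>s. ereal ((a+b) * (phi (c*s) / phi s)) \<le> (SUP pq\<in>S. g pq)) (at_right 0)"
      using phi_ev
    proof eventually_elim
      case (elim s)
      then have "0 < s" "s < 1" "0 < phi s" unfolding phi_def by auto
      from gv[OF this] show ?case by (metis SUP_upper)
    qed
    have "ereal ((a+b)*(c*c)) \<le> (SUP pq\<in>S. g pq)"
      by (rule tendsto_le[OF trivial_limit_at_right_real tendsto_const tendsto_ereal[OF lim] ev])
    then show ?thesis using kk by simp
  qed
  show ?thesis unfolding eta using up lo unfolding k_def a_def b_def by (intro antisym SUP_least) auto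
qed

theorem mainTheorem3:
  fixes F G :: "nat \<Rightarrow> int \<Rightarrow> real"
  assumes "biso1 F" and "biso1 G"
    and "eta_KL {0, 1} {-1, 0, 1} F = eta_KL {0, 1} {-1, 0, 1} G"
  shows "less_noisy {0, 1} {-1, 0, 1} F {-1, 0, 1} G \<or> less_noisy {0, 1} {-1, 0, 1} G {-1, 0, 1} F"
proof -
  note f = biso1_facts[OF assms(1)] and g = biso1_facts[OF assms(2)]
  have kap: "(F 0 (-1) - F 0 1)^2/(F 0 (-1) + F 0 1) = (G 0 (-1) - G 0 1)^2/(G 0 (-1) + G 0 1)"
    using assms(3) eta_val[OF assms(1)] eta_val[OF assms(2)] by simp
  show ?thesis
  proof (cases "F 0 (-1) = F 0 1")
    case True
    then have "(G 0 (-1) - G 0 1)^2/(G 0 (-1) + G 0 1) = 0" using kap by simp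
    then have "G 0 (-1) = G 0 1" using g(1) g(3) by (auto simp: divide_eq_0_iff)
    then show ?thesis using LN_zero[OF assms(1) assms(2) True] by simp
  next
    case False
    have mF: "F 0 (-1) + F 0 1 > 0" using f(1) f(3) False by linarith
    have "(F 0 (-1) - F 0 1)^2/(F 0 (-1) + F 0 1) > 0" using False mF by simp
    then have kG: "(G 0 (-1) - G 0 1)^2/(G 0 (-1) + G 0 1) > 0" using kap by simp
    have mG: "G 0 (-1) + G 0 1 > 0"
    proof (rule ccontr)
      assume "\<not> G 0 (-1) + G 0 1 > 0"
      then have "G 0 (-1) + G 0 1 = 0" using g(1) g(3) by linarith
      then show False using kG by simp
    qed
    show ?thesis
    proof (cases "\<bar>G 0 (-1) - G 0 1\<bar>/(G 0 (-1) + G 0 1) \<le> \<bar>F 0 (-1) - F 0 1\<bar>/(F 0 (-1) + F 0 1)")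
      case True
      then show ?thesis using LN_pos[OF assms(1) assms(2) mF mG kap] by simp
    next
      case False
      then have "\<bar>F 0 (-1) - F 0 1\<bar>/(F 0 (-1) + F 0 1) \<le> \<bar>G 0 (-1) - G 0 1\<bar>/(G 0 (-1) + G 0 1)" by simp
      then show ?thesis using LN_pos[OF assms(2) assms(1) mG mF kap[symmetric]] by simp
    qed
  qed
qed

end
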